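(* Let $f:\mathbb{R}^n\to\mathbb{R}$ be differentiable, $\mu$-strongly convex, with $L$-Lipschitz gradient $\nabla f$, and let $x^*$ be its unique minimizer. Suppose the estimators $G^t$ are independent versions of an unbiased estimator $G$ of $\nabla f$, and that $G$ is $L$-Lipschitz continuous almost surely. Let $\mathcal{E}^t$ denote the event that $\|G^t(x^t)\|_\infty\le\eta$. Then the iterates of SMGD satisfy $$\mathbb{E}\left[\|x^{t+1}-x^*\|_2^2\,\middle|\,x^t,\mathcal{E}^t\right]\le\Big(1-\frac{2\alpha\mu}{\eta}\Big)\|x^t-x^*\|_2^2+\frac{L\alpha^2\sqrt{n}}{\eta}\|x^t-x^*\|_2+\frac{\alpha^2}{\eta}\,\mathbb{E}\left[\|G^t(x^* )\|_1\,\middle|\,x^t,\mathcal{E}^t\right].$$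
   Context: A differentiable $f$ is $\mu$-strongly convex if $\langle\nabla f(x)-\nabla f(y),x-y\rangle\ge\mu\|x-y\|_2^2$ for all $x,y$. SMGD: Let $\alpha>0$, $\eta>0$, $x^0\in\alpha\mathbb{Z}^n$. At step $t$ a random vector $G^t(x^t)\in\mathbb{R}^n$ is drawn; then for each coordinate $i$, conditionally on $G^t$ and $x^t$, $\Delta^t_i\in\{0,1\}$ is Bernoulli with $\mathbb{P}[\Delta^t_i=1\mid G^t,x^t]=\min(|G^t(x^t)_i|/\eta,1)$, and $x^{t+1}_i=x^t_i-\alpha\,\mathrm{sgn}(G^t(x^t)_i)\Delta^t_i$. A random function $G$ is an unbiased estimator of $\nabla f$ if $\mathbb{E}[G(x)]=\nabla f(x)$ for all $x$. Standing assumptions: $\{G^t\}$ are i.i.d. copies of $G$, each $G^t$ is independent of $x^t$, and $\mathbb{E}[G^t(x^t)\mid x^t,\mathcal{E}^t]=\nabla f(x^t)$. *)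

theory Defs
  imports "HOL-Probability.Probability"
begin

definition l1norm :: "real^'n::finite \<Rightarrow> real" where
  "l1norm v = (\<Sum>i\<in>UNIV. \<bar>v $ i\<bar>)"

definition cond_exp_event :: "'a measure \<Rightarrow> 'a set \<Rightarrow> ('a \<Rightarrow> real) \<Rightarrow> real" where
  "cond_exp_event M E X = (\<integral>\<omega>. indicator E \<omega> * X \<omega> \<partial>M) / measure M E"

text \<open>Conditional law of the Bernoulli mask Delta of SMGD given the gradient sample g:
  independent coordinates, P[Delta_i = 1] = min(|g_i|/eta, 1).\<close>
definition smgd_delta_pmf :: "real \<Rightarrow> real^'n::finite \<Rightarrow> ('n \<Rightarrow> bool) pmf" where
  "smgd_delta_pmf \<eta> g = Pi_pmf UNIV False (\<lambda>i. bernoulli_pmf (min (\<bar>g $ i\<bar> / \<eta>) 1))"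

definition smgd_update :: "real \<Rightarrow> real^'n::finite \<Rightarrow> real^'n \<Rightarrow> ('n \<Rightarrow> bool) \<Rightarrow> real^'n" where
  "smgd_update \<alpha> x g D = (\<chi> i. x $ i - \<alpha> * sgn (g $ i) * (if D i then 1 else 0))"

end

theory Submission
  imports Defs
begin

lemma norm_sq_vec: "(norm (v::real^'n))\<^sup>2 = (\<Sum>i\<in>UNIV. (v$i)\<^sup>2)"
  by (simp add: norm_vec_def L2_set_def sum_nonneg)

lemma delta_exp:
  fixes g x xs :: "real^'n::finite"
  assumes eta: "\<eta> > 0" and bnd: "\<forall>i. \<bar>g$i\<bar> \<le> \<eta>"
  shows "measure_pmf.expectation (smgd_delta_pmf \<eta> g) (\<lambda>D. (norm (smgd_update \<alpha> x g D - xs))\<^sup>2)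
   = (norm (x - xs))\<^sup>2 - 2 * \<alpha> / \<eta> * (g \<bullet> (x - xs)) + \<alpha>\<^sup>2 / \<eta> * l1norm g"
proof -
  let ?P = "smgd_delta_pmf \<eta> g"
  have fin: "finite (set_pmf ?P)" by (rule finite_subset[of _ UNIV]) auto
  have p: "min (\<bar>g $ i\<bar> / \<eta>) 1 = \<bar>g $ i\<bar> / \<eta>" for i using bnd eta by auto
  have comp: "measure_pmf.expectation ?P (\<lambda>D. ((x$i - xs$i) - \<alpha> * sgn (g$i) * (if D i then 1 else 0))\<^sup>2)
     = (x$i - xs$i)\<^sup>2 - 2 * \<alpha> / \<eta> * (g$i * (x$i - xs$i)) + \<alpha>\<^sup>2 / \<eta> * \<bar>g$i\<bar>" for i
  proof -
    have "measure_pmf.expectation ?P (\<lambda>D. ((x$i - xs$i) - \<alpha> * sgn (g$i) * (if D i then 1 else 0))\<^sup>2)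
       = measure_pmf.expectation (map_pmf (\<lambda>D. D i) ?P) (\<lambda>b. ((x$i - xs$i) - \<alpha> * sgn (g$i) * (if b then 1 else 0))\<^sup>2)"
      by (simp add: integral_map_pmf)
    also have "map_pmf (\<lambda>D. D i) ?P = bernoulli_pmf (\<bar>g $ i\<bar> / \<eta>)"
      unfolding smgd_delta_pmf_def by (subst Pi_pmf_component) (auto simp: p)
    also have "measure_pmf.expectation (bernoulli_pmf (\<bar>g $ i\<bar> / \<eta>)) (\<lambda>b. ((x$i - xs$i) - \<alpha> * sgn (g$i) * (if b then 1 else 0))\<^sup>2)
      = ((x$i - xs$i) - \<alpha> * sgn (g$i))\<^sup>2 * (\<bar>g $ i\<bar> / \<eta>) + (x$i - xs$i)\<^sup>2 * (1 - \<bar>g $ i\<bar> / \<eta>)"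
      using bnd[rule_format, of i] eta by (subst integral_bernoulli_pmf) auto
    also have "\<dots> = (x$i - xs$i)\<^sup>2 - 2 * \<alpha> / \<eta> * (g$i * (x$i - xs$i)) + \<alpha>\<^sup>2 / \<eta> * \<bar>g$i\<bar>"
      using eta
      by (cases "g$i > 0"; cases "g$i < 0") (auto simp: field_simps power2_eq_square sgn_if)
    finally show ?thesis .
  qed
  have "measure_pmf.expectation ?P (\<lambda>D. (norm (smgd_update \<alpha> x g D - xs))\<^sup>2)
     = measure_pmf.expectation ?P (\<lambda>D. \<Sum>i\<in>UNIV. ((x$i - xs$i) - \<alpha> * sgn (g$i) * (if D i then 1 else 0))\<^sup>2)"
    by (simp add: norm_sq_vec smgd_update_def algebra_simps)
  also have "\<dots> = (\<Sum>i\<in>UNIV. measure_pmf.expectation ?P (\<lambda>D. ((x$i - xs$i) - \<alpha> * sgn (g$i) * (if D i then 1 else 0))\<^sup>2))"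
    by (rule Bochner_Integration.integral_sum[where f="\<lambda>i D. ((x$i - xs$i) - \<alpha> * sgn (g$i) * (if D i then 1 else 0))\<^sup>2"], rule integrable_measure_pmf_finite[OF fin])
  also have "\<dots> = (\<Sum>i\<in>UNIV. (x$i - xs$i)\<^sup>2 - 2 * \<alpha> / \<eta> * (g$i * (x$i - xs$i)) + \<alpha>\<^sup>2 / \<eta> * \<bar>g$i\<bar>)"
    by (simp add: comp)
  also have "\<dots> = (norm (x - xs))\<^sup>2 - 2 * \<alpha> / \<eta> * (g \<bullet> (x - xs)) + \<alpha>\<^sup>2 / \<eta> * l1norm g"
    by (simp add: norm_sq_vec l1norm_def inner_vec_def sum.distrib sum_subtractf sum_distrib_left)
  finally show ?thesis .
qed

lemma l1_le: "l1norm (v::real^'n::finite) \<le> sqrt (real CARD('n)) * norm v"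
proof -
  have "(l1norm v)\<^sup>2 \<le> (\<Sum>i\<in>UNIV. (\<bar>v$i\<bar>)\<^sup>2) * card (UNIV::'n set)"
    unfolding l1norm_def by (rule sum_squared_le_sum_of_squares)
  also have "\<dots> = (sqrt (real CARD('n)) * norm v)\<^sup>2"
    by (simp add: norm_sq_vec power_mult_distrib)
  finally show ?thesis
    by (rule power2_le_imp_le) simp
qed

lemma l1_tri: "l1norm (a::real^'n::finite) \<le> l1norm b + l1norm (a - b)"
  unfolding l1norm_def sum.distrib[symmetric] by (rule sum_mono) auto

lemma integrable_l1:
  fixes V :: "'w \<Rightarrow> real^'n::finite"
  assumes "integrable M V"
  shows "integrable M (\<lambda>\<omega>. l1norm (V \<omega>))"
proof -
  have c: "integrable M (\<lambda>\<omega>. V \<omega> $ i)" for i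
  proof -
    have "integrable M (\<lambda>\<omega>. V \<omega> \<bullet> axis i 1)" using assms by (rule integrable_inner_left)
    then show ?thesis by (simp add: inner_axis)
  qed
  show ?thesis unfolding l1norm_def
    by (intro Bochner_Integration.integrable_sum integrable_abs c)
qed

lemma meas_infnorm:
  fixes V :: "'w \<Rightarrow> real^'n::finite"
  assumes "V \<in> borel_measurable M"
  shows "(\<lambda>\<omega>. infnorm (V \<omega>)) \<in> borel_measurable M"
  using borel_measurable_continuous_on[OF continuous_on_infnorm[OF continuous_on_id] assms] by simp

theorem theorem5p1:
  fixes f :: "real^'n::finite \<Rightarrow> real"
    and gradf :: "real^'n \<Rightarrow> real^'n"
    and \<mu> L \<alpha> \<eta> :: real
    and xstar x :: "real^'n"
    and M :: "'w measure"
    and G :: "'w \<Rightarrow> real^'n \<Rightarrow> real^'n"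
  assumes grad: "\<forall>y. (f has_derivative (\<lambda>h. gradf y \<bullet> h)) (at y)"
    and mu_pos: "\<mu> > 0"
    and strongly_convex: "\<forall>y z. (gradf y - gradf z) \<bullet> (y - z) \<ge> \<mu> * (norm (y - z))\<^sup>2"
    and grad_lipschitz: "\<forall>y z. norm (gradf y - gradf z) \<le> L * norm (y - z)"
    and minimizer: "\<forall>y. f xstar \<le> f y"
    and alpha_pos: "\<alpha> > 0" and eta_pos: "\<eta> > 0"
    and iterate_grid: "\<forall>i. \<exists>k::int. x $ i = \<alpha> * of_int k"
    and prob: "prob_space M"
    and G_meas: "\<forall>y. (\<lambda>\<omega>. G \<omega> y) \<in> borel_measurable M"
    and G_integrable: "\<forall>y. integrable M (\<lambda>\<omega>. G \<omega> y)"
    and unbiased: "\<forall>y. (\<integral>\<omega>. G \<omega> y \<partial>M) = gradf y"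
    and G_lipschitz: "AE \<omega> in M. \<forall>y z. norm (G \<omega> y - G \<omega> z) \<le> L * norm (y - z)"
    and E_pos: "measure M {\<omega>\<in>space M. infnorm (G \<omega> x) \<le> \<eta>} > 0"
    and cond_unbiased: "(\<integral>\<omega>. indicator {\<omega>\<in>space M. infnorm (G \<omega> x) \<le> \<eta>} \<omega> *\<^sub>R G \<omega> x \<partial>M)
        = measure M {\<omega>\<in>space M. infnorm (G \<omega> x) \<le> \<eta>} *\<^sub>R gradf x"
  shows "cond_exp_event M {\<omega>\<in>space M. infnorm (G \<omega> x) \<le> \<eta>}
           (\<lambda>\<omega>. measure_pmf.expectation (smgd_delta_pmf \<eta> (G \<omega> x))
                   (\<lambda>D. (norm (smgd_update \<alpha> x (G \<omega> x) D - xstar))\<^sup>2))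
         \<le> (1 - 2 * \<alpha> * \<mu> / \<eta>) * (norm (x - xstar))\<^sup>2
           + L * \<alpha>\<^sup>2 * sqrt (real CARD('n)) / \<eta> * norm (x - xstar)
           + \<alpha>\<^sup>2 / \<eta> * cond_exp_event M {\<omega>\<in>space M. infnorm (G \<omega> x) \<le> \<eta>} (\<lambda>\<omega>. l1norm (G \<omega> xstar))"
  proof -
  interpret P: prob_space M by (rule prob)
  define E where "E = {\<omega>\<in>space M. infnorm (G \<omega> x) \<le> \<eta>}"
  define PE where "PE = measure M E"
  define d where "d = x - xstar"
  define nd where "nd = norm d"
  have PE_pos: "PE > 0" using E_pos unfolding PE_def E_def .
  have Emeas: "E \<in> sets M" unfolding E_def
    by (rule borel_measurable_le) (auto intro: meas_infnorm G_meas[rule_format])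
  have g0: "gradf xstar = 0"
  proof -
    have "(\<lambda>h. gradf xstar \<bullet> h) = (\<lambda>v. 0)"
      using differential_zero_maxmin[where x=xstar and S=UNIV and f=f and ?f'="\<lambda>h. gradf xstar \<bullet> h"] grad minimizer by auto
    then have "gradf xstar \<bullet> gradf xstar = 0" by metis
    then show ?thesis by simp
  qed
  have sc: "gradf x \<bullet> d \<ge> \<mu> * nd\<^sup>2"
    using strongly_convex[rule_format, of x xstar] g0 unfolding d_def nd_def by simp
  define F where "F = (\<lambda>g::real^'n. nd\<^sup>2 - 2 * \<alpha> / \<eta> * (g \<bullet> d) + \<alpha>\<^sup>2 / \<eta> * l1norm g)"
  have pt: "indicator E \<omega> * measure_pmf.expectation (smgd_delta_pmf \<eta> (G \<omega> x))
                   (\<lambda>D. (norm (smgd_update \<alpha> x (G \<omega> x) D - xstar))\<^sup>2)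
       = indicator E \<omega> * nd\<^sup>2 - 2 * \<alpha> / \<eta> * ((indicator E \<omega> *\<^sub>R G \<omega> x) \<bullet> d)
         + \<alpha>\<^sup>2 / \<eta> * (indicator E \<omega> * l1norm (G \<omega> x))" for \<omega>
  proof (cases "\<omega> \<in> E")
    case True
    then have "\<forall>i. \<bar>G \<omega> x $ i\<bar> \<le> \<eta>" unfolding E_def
      using component_le_infnorm_cart order_trans by blast
    from delta_exp[OF eta_pos this, of \<alpha> x xstar] True show ?thesis
      by (simp add: d_def nd_def)
  qed simp
  have iG: "integrable M (\<lambda>\<omega>. G \<omega> y)" for y using G_integrable by blast
  have i1: "integrable M (\<lambda>\<omega>. indicator E \<omega> * nd\<^sup>2)"
    using integrable_mult_indicator[OF Emeas, where f="\<lambda>_. nd\<^sup>2"] by (simp add: mult.commute)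
  have iv: "integrable M (\<lambda>\<omega>. indicator E \<omega> *\<^sub>R G \<omega> x)"
    by (rule integrable_mult_indicator[OF Emeas iG])
  have i2: "integrable M (\<lambda>\<omega>. (indicator E \<omega> *\<^sub>R G \<omega> x) \<bullet> d)"
    using iv by (rule integrable_inner_left)
  have i3: "integrable M (\<lambda>\<omega>. indicator E \<omega> * l1norm (G \<omega> x))"
    using integrable_mult_indicator[OF Emeas integrable_l1[OF iG[of x]]] by simp
  have i4: "integrable M (\<lambda>\<omega>. indicator E \<omega> * (l1norm (G \<omega> xstar) + sqrt (real CARD('n)) * L * nd))"
    using integrable_mult_indicator[OF Emeas Bochner_Integration.integrable_add[OF integrable_l1[OF iG[of xstar]] P.integrable_const[of "sqrt (real CARD('n)) * L * nd"]]]
    by simp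
  have i5: "integrable M (\<lambda>\<omega>. indicator E \<omega> * l1norm (G \<omega> xstar))"
    using integrable_mult_indicator[OF Emeas integrable_l1[OF iG[of xstar]]] by simp
  have I1: "(\<integral>\<omega>. indicator E \<omega> * nd\<^sup>2 \<partial>M) = PE * nd\<^sup>2"
    using Emeas by (simp add: PE_def)
  have I2: "(\<integral>\<omega>. (indicator E \<omega> *\<^sub>R G \<omega> x) \<bullet> d \<partial>M) = PE * (gradf x \<bullet> d)"
  proof -
    have "(\<integral>\<omega>. (indicator E \<omega> *\<^sub>R G \<omega> x) \<bullet> d \<partial>M) = (\<integral>\<omega>. indicator E \<omega> *\<^sub>R G \<omega> x \<partial>M) \<bullet> d"
      by (rule integral_inner_left) (rule iv)
    also have "\<dots> = (PE *\<^sub>R gradf x) \<bullet> d"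
      using cond_unbiased unfolding E_def[symmetric] PE_def by simp
    finally show ?thesis by simp
  qed
  have I3: "(\<integral>\<omega>. indicator E \<omega> * l1norm (G \<omega> x) \<partial>M)
      \<le> (\<integral>\<omega>. indicator E \<omega> * l1norm (G \<omega> xstar) \<partial>M) + PE * (sqrt (real CARD('n)) * L * nd)"
  proof -
    have "(\<integral>\<omega>. indicator E \<omega> * l1norm (G \<omega> x) \<partial>M)
       \<le> (\<integral>\<omega>. indicator E \<omega> * (l1norm (G \<omega> xstar) + sqrt (real CARD('n)) * L * nd) \<partial>M)"
    proof (rule integral_mono_AE[OF i3 i4])
      show "AE \<omega> in M. indicator E \<omega> * l1norm (G \<omega> x)
          \<le> indicator E \<omega> * (l1norm (G \<omega> xstar) + sqrt (real CARD('n)) * L * nd)"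
        using G_lipschitz
      proof eventually_elim
        case (elim \<omega>)
        have "l1norm (G \<omega> x) \<le> l1norm (G \<omega> xstar) + l1norm (G \<omega> x - G \<omega> xstar)" by (rule l1_tri)
        also have "l1norm (G \<omega> x - G \<omega> xstar) \<le> sqrt (real CARD('n)) * norm (G \<omega> x - G \<omega> xstar)"
          by (rule l1_le)
        also have "\<dots> \<le> sqrt (real CARD('n)) * (L * nd)"
          using elim[rule_format, of x xstar] by (intro mult_left_mono) (auto simp: d_def nd_def)
        finally show ?case by (auto simp: indicator_def)
      qed
    qed
    also have "\<dots> = (\<integral>\<omega>. indicator E \<omega> * l1norm (G \<omega> xstar) \<partial>M) + PE * (sqrt (real CARD('n)) * L * nd)"
    proof -
      define c where "c = sqrt (real CARD('n)) * L * nd"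
      have ic: "integrable M (\<lambda>\<omega>. indicator E \<omega> * c)"
        using integrable_mult_indicator[OF Emeas, where f="\<lambda>_. c"] by (simp add: mult.commute)
      have "(\<integral>\<omega>. indicator E \<omega> * (l1norm (G \<omega> xstar) + c) \<partial>M)
          = (\<integral>\<omega>. indicator E \<omega> * l1norm (G \<omega> xstar) + indicator E \<omega> * c \<partial>M)"
        by (simp add: distrib_left)
      also have "\<dots> = (\<integral>\<omega>. indicator E \<omega> * l1norm (G \<omega> xstar) \<partial>M) + (\<integral>\<omega>. indicator E \<omega> * c \<partial>M)"
        by (rule Bochner_Integration.integral_add[OF i5 ic])
      also have "(\<integral>\<omega>. indicator E \<omega> * c \<partial>M) = PE * c"
        using Emeas by (simp add: PE_def)
      finally show ?thesis unfolding c_def .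
    qed
    finally show ?thesis .
  qed
  define J where "J = (\<integral>\<omega>. indicator E \<omega> * l1norm (G \<omega> xstar) \<partial>M)"
  define K where "K = (\<integral>\<omega>. indicator E \<omega> * l1norm (G \<omega> x) \<partial>M)"
  have LHS: "cond_exp_event M E
           (\<lambda>\<omega>. measure_pmf.expectation (smgd_delta_pmf \<eta> (G \<omega> x))
                   (\<lambda>D. (norm (smgd_update \<alpha> x (G \<omega> x) D - xstar))\<^sup>2))
      = (PE * nd\<^sup>2 - 2 * \<alpha> / \<eta> * (PE * (gradf x \<bullet> d)) + \<alpha>\<^sup>2 / \<eta> * K) / PE"
    unfolding cond_exp_event_def pt PE_def[symmetric] K_def
    using i1 i2 i3 I1 I2 by simp
  have RHS: "cond_exp_event M E (\<lambda>\<omega>. l1norm (G \<omega> xstar)) = J / PE"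
    unfolding cond_exp_event_def J_def PE_def ..
  have KJ: "K \<le> J + PE * (sqrt (real CARD('n)) * L * nd)" using I3 unfolding J_def K_def .
  have "(PE * nd\<^sup>2 - 2 * \<alpha> / \<eta> * (PE * (gradf x \<bullet> d)) + \<alpha>\<^sup>2 / \<eta> * K) / PE
     = nd\<^sup>2 - 2 * \<alpha> / \<eta> * (gradf x \<bullet> d) + \<alpha>\<^sup>2 / \<eta> * (K / PE)"
    using PE_pos by (simp add: field_simps)
  also have "\<dots> \<le> nd\<^sup>2 - 2 * \<alpha> / \<eta> * (\<mu> * nd\<^sup>2) + \<alpha>\<^sup>2 / \<eta> * (J / PE + sqrt (real CARD('n)) * L * nd)"
  proof -
    have a: "2 * \<alpha> / \<eta> * (\<mu> * nd\<^sup>2) \<le> 2 * \<alpha> / \<eta> * (gradf x \<bullet> d)"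
      using sc alpha_pos eta_pos by (intro mult_left_mono) auto
    have "K / PE \<le> (J + PE * (sqrt (real CARD('n)) * L * nd)) / PE"
      using KJ PE_pos by (simp add: divide_right_mono)
    also have "\<dots> = J / PE + sqrt (real CARD('n)) * L * nd" using PE_pos by (simp add: field_simps)
    finally have b: "\<alpha>\<^sup>2 / \<eta> * (K / PE) \<le> \<alpha>\<^sup>2 / \<eta> * (J / PE + sqrt (real CARD('n)) * L * nd)"
      using eta_pos by (intro mult_left_mono) auto
    from a b show ?thesis by linarith
  qed
  also have "\<dots> = (1 - 2 * \<alpha> * \<mu> / \<eta>) * nd\<^sup>2
           + L * \<alpha>\<^sup>2 * sqrt (real CARD('n)) / \<eta> * nd + \<alpha>\<^sup>2 / \<eta> * (J / PE)"
    using PE_pos eta_pos by (simp add: field_simps)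
  finally show ?thesis
    using LHS RHS unfolding E_def[symmetric] nd_def d_def by simp
qed

end
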